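(* Let $N\geq 2$ be an integer, let $I_0>0$, and let $0<\mu_{min}\leq\mu_{max}$ and $\varepsilon_{max}\geq 0$ be given constants. For $K>0$, $\mu_1\in\mathbb{R}$ and $\varepsilon\geq 0$ define $$G_N(K,\mu_1,\varepsilon)=\frac{I_0}{K}\Big[(1+K\mu_1)^N+\big(1-K\mu_1(1+\varepsilon)\big)^N-2\Big].$$ Call a pair $(\mu_1,\varepsilon)$ admissible if $\mu_{min}\leq|\mu_1|\leq\mu_{max}$ and $0\leq\varepsilon\leq\varepsilon_{max}$. Fix $K>0$. (i) If $N$ is odd, then $G_N(K,\mu_1,\varepsilon)>0$ for all admissible pairs $(\mu_1,\varepsilon)$ if and only if $$G_N(K,\mu_{min},\varepsilon_{max})>0\quad\text{and}\quad G_N(K,\mu_{max},\varepsilon_{max})>0.$$ (ii) If $N$ is even, then $G_N(K,\mu_1,\varepsilon)>0$ for all admissible pairs $(\mu_1,\varepsilon)$ if and only if either $$K>\frac{2^{1/N}-1}{\mu_{min}},$$ or both $$K\leq\frac{1}{\mu_{min}(1+\varepsilon_{max})}\quad\text{and}\quad G_N(K,\mu_{min},\varepsilon_{max})>0.$$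
   Context: Financial interpretation (not needed for the mathematical statement): two stocks have independent per-period returns with constant means $\mu_1$ and $\mu_2=\beta\mu_1$, where $\beta=(1+\varepsilon)\beta_0$ with $\beta_0\neq 0$ known and $\varepsilon\in[0,\varepsilon_{max}]$ unknown ("directionally correlated returns"), and $\mu_{min}\leq|\mu_1|\leq\mu_{max}$ ("bounded non-zero momentum"). A two-stock controller invests $I_1(k)=I_0+Kg_1(k)$ in the first stock and $I_2(k)=-I_0/\beta_0-(K/\beta_0)g_2(k)$ in the second stock, where $g_i$ are the cumulative gain-loss functions with $g_i(0)=0$, under idealized frictionless market conditions. Then the expected total gain after $N$ periods is $\mathbb{E}[g(N)]=G_N(K,\mu_1,\varepsilon)$, and the theorem characterizes the feedback parameters $K>0$ for which this expectation is positive for all admissible parameters. Here $2^{1/N}$ denotes the positive real $N$-th root of $2$. *)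

theory Defs
  imports Complex_Main
begin

definition G_N :: "nat \<Rightarrow> real \<Rightarrow> real \<Rightarrow> real \<Rightarrow> real \<Rightarrow> real" where
  "G_N N I0 K mu1 eps = I0 / K * ((1 + K * mu1) ^ N + (1 - K * mu1 * (1 + eps)) ^ N - 2)"

definition admissible :: "real \<Rightarrow> real \<Rightarrow> real \<Rightarrow> real \<Rightarrow> real \<Rightarrow> bool" where
  "admissible mu_min mu_max eps_max mu1 eps \<longleftrightarrow>
     mu_min \<le> \<bar>mu1\<bar> \<and> \<bar>mu1\<bar> \<le> mu_max \<and> 0 \<le> eps \<and> eps \<le> eps_max"

end

theory Submission
  imports Defs "HOL-Analysis.Analysis"
begin

definition F :: "nat \<Rightarrow> real \<Rightarrow> real \<Rightarrow> real" where
  "F N x a = (1 + x) ^ N + (1 - x * a) ^ N - 2"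

lemma G_pos_iff:
  assumes "I0 > 0" "K > 0"
  shows "G_N N I0 K m e > 0 \<longleftrightarrow> F N (K * m) (1 + e) > 0"
proof -
  have "G_N N I0 K m e = (I0 / K) * F N (K * m) (1 + e)"
    by (simp add: G_N_def F_def mult.assoc)
  moreover have "I0 / K > 0" using assms by simp
  ultimately show ?thesis using mult_pos_pos zero_less_mult_pos by metis
qed

lemma S_ge:
  fixes t :: real assumes "t > 0"
  shows "(1 + t) ^ n + (1 - t) ^ n \<ge> 2 \<and> (n \<ge> 2 \<longrightarrow> (1 + t) ^ n + (1 - t) ^ n > 2)"
proof (induction n)
  case 0 then show ?case by simp
next
  case (Suc n)
  have ab: "\<bar>1 - t\<bar> < 1 + t" using assms by auto
  have D: "(1 - t) ^ n \<le> (1 + t) ^ n"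
  proof -
    have "(1 - t) ^ n \<le> \<bar>1 - t\<bar> ^ n" by (metis abs_ge_self power_abs)
    also have "\<dots> \<le> (1 + t) ^ n" using ab by (intro power_mono) auto
    finally show ?thesis .
  qed
  have eq: "(1 + t) ^ Suc n + (1 - t) ^ Suc n = (1 + t) ^ n + (1 - t) ^ n + t * ((1 + t) ^ n - (1 - t) ^ n)"
    by (simp add: algebra_simps)
  have nn: "t * ((1 + t) ^ n - (1 - t) ^ n) \<ge> 0" using D assms by simp
  show ?case
  proof (cases n)
    case 0 then show ?thesis by simp
  next
    case (Suc k)
    have "(1 - t) ^ n < (1 + t) ^ n"
    proof -
      have "(1 - t) ^ n \<le> \<bar>1 - t\<bar> ^ n" by (metis abs_ge_self power_abs)
      also have "\<dots> < (1 + t) ^ n" using ab Suc by (intro power_strict_mono) auto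
      finally show ?thesis .
    qed
    then have "t * ((1 + t) ^ n - (1 - t) ^ n) > 0" using assms by simp
    then show ?thesis using eq Suc.IH by linarith
  qed
qed

lemma neg_pos:
  fixes t a :: real assumes "t > 0" "a \<ge> 1" "N \<ge> 2"
  shows "F N (- t) a > 0"
proof -
  have "(1 + t) ^ N \<le> (1 + t * a) ^ N"
    using assms by (intro power_mono) (auto simp: mult_le_cancel_left1)
  moreover have "(1 + t) ^ N + (1 - t) ^ N > 2" using S_ge[OF assms(1), of N] assms by auto
  ultimately show ?thesis by (simp add: F_def)
qed

lemma even_conv:
  fixes p x A :: real assumes "even N" "0 < p" "p \<le> x" "F N p A > 0"
  shows "F N x A > 0"
proof -
  define t where "t = p / x"
  have x0: "x > 0" using assms by linarith
  have t0: "t > 0" "t \<le> 1" using assms x0 by (auto simp: t_def)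
  have cv: "convex_on UNIV (\<lambda>z::real. z ^ N)" by (rule convex_power_even[OF assms(1)])
  have e1: "1 + p = (1 - t) * 1 + t * (1 + x)" using x0 by (simp add: t_def field_simps)
  have e2: "1 - p * A = (1 - t) * 1 + t * (1 - x * A)" using x0 by (simp add: t_def field_simps)
  have "((1 - t) * 1 + t * (1 + x)) ^ N \<le> (1 - t) * 1 ^ N + t * (1 + x) ^ N"
    using convex_onD[OF cv, of t 1 "1 + x"] t0 by simp
  then have c1: "(1 + p) ^ N \<le> (1 - t) * 1 ^ N + t * (1 + x) ^ N"
    by (simp only: e1)
  have "((1 - t) * 1 + t * (1 - x * A)) ^ N \<le> (1 - t) * 1 ^ N + t * (1 - x * A) ^ N"
    using convex_onD[OF cv, of t 1 "1 - x * A"] t0 by simp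
  then have c2: "(1 - p * A) ^ N \<le> (1 - t) * 1 ^ N + t * (1 - x * A) ^ N"
    by (simp only: e2)
  have "F N p A \<le> t * F N x A" using c1 c2 by (simp add: F_def algebra_simps)
  with assms(4) have "0 < t * F N x A" by linarith
  with t0 show ?thesis using zero_less_mult_pos by blast
qed

lemma concave_phi:
  fixes z0 z1 z2 c A :: real
  assumes "z0 < z1" "z1 < z2" "c \<ge> 0"
    and "1 + z0 - c * \<bar>1 - z0 * A\<bar> > 0" "1 + z2 - c * \<bar>1 - z2 * A\<bar> > 0"
  shows "1 + z1 - c * \<bar>1 - z1 * A\<bar> > 0"
proof -
  define s where "s = (z1 - z0) / (z2 - z0)"
  have s: "0 < s" "s < 1" using assms by (auto simp: s_def field_simps)
  have d: "z2 - z0 > 0" using assms by simp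
  have sd: "s * (z2 - z0) = z1 - z0" using d by (simp add: s_def)
  have "(1 - s) * z0 + s * z2 = z0 + s * (z2 - z0)" by (simp add: algebra_simps)
  then have zz: "z1 = (1 - s) * z0 + s * z2" using sd by linarith
  have e: "1 - z1 * A = (1 - s) * (1 - z0 * A) + s * (1 - z2 * A)" unfolding zz by (simp add: algebra_simps)
  have "\<bar>1 - z1 * A\<bar> \<le> \<bar>(1 - s) * (1 - z0 * A)\<bar> + \<bar>s * (1 - z2 * A)\<bar>"
    unfolding e by (rule abs_triangle_ineq)
  also have "\<dots> = (1 - s) * \<bar>1 - z0 * A\<bar> + s * \<bar>1 - z2 * A\<bar>" using s by (simp add: abs_mult)
  finally have ab: "\<bar>1 - z1 * A\<bar> \<le> (1 - s) * \<bar>1 - z0 * A\<bar> + s * \<bar>1 - z2 * A\<bar>" .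
  define u0 where "u0 = \<bar>1 - z0 * A\<bar>"
  define u1 where "u1 = \<bar>1 - z1 * A\<bar>"
  define u2 where "u2 = \<bar>1 - z2 * A\<bar>"
  have ab': "u1 \<le> (1 - s) * u0 + s * u2" using ab by (simp only: u0_def u1_def u2_def)
  have "c * u1 \<le> c * ((1 - s) * u0 + s * u2)"
    using ab' assms(3) by (rule mult_left_mono)
  also have "\<dots> = (1 - s) * (c * u0) + s * (c * u2)" by (simp add: algebra_simps)
  finally have h1: "c * u1 \<le> (1 - s) * (c * u0) + s * (c * u2)" .
  have h2: "(1 - s) * (1 + z0 - c * u0) + s * (1 + z2 - c * u2) > 0"
    using s assms(4,5) unfolding u0_def u2_def by (intro add_pos_pos mult_pos_pos) auto
  have h3: "(1 - s) * (1 + z0 - c * u0) + s * (1 + z2 - c * u2)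
      = 1 + ((1 - s) * z0 + s * z2) - ((1 - s) * (c * u0) + s * (c * u2))"
    by (simp add: algebra_simps)
  have "1 + z1 - c * u1 > 0" using h1 h2 h3 zz by linarith
  then show ?thesis by (simp only: u1_def)
qed

lemma odd_unimodal:
  fixes p q x A :: real
  assumes "odd N" "N \<ge> 2" "A \<ge> 1" "0 < p" "p \<le> x" "x \<le> q" "F N p A > 0" "F N q A > 0"
  shows "F N x A > 0"
proof (rule ccontr)
  assume "\<not> ?thesis"
  then have gx: "F N x A \<le> 0" by simp
  have px: "p < x" using gx assms(5,7) by (cases "p = x") auto
  have xq: "x < q" using gx assms(6,8) by (cases "x = q") auto
  define m where "m = N - 1"
  have Nm: "N = Suc m" using assms(2) by (simp add: m_def)
  have em: "even m" using assms(1) Nm by simp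
  have m0: "m > 0" using assms(2) Nm by simp
  define g' where "g' z = real N * (1 + z) ^ m - real N * A * (1 - z * A) ^ m" for z
  have der: "DERIV (\<lambda>z. F N z A) z :> g' z" for z
    unfolding F_def g'_def Nm
    by (rule derivative_eq_intros refl | simp)+
  have F0: "F N 0 A = 0" by (simp add: F_def)
  obtain z0 where z0: "0 < z0" "z0 < p" "F N p A - F N 0 A = (p - 0) * g' z0"
    using MVT2[OF assms(4), of "\<lambda>z. F N z A" g'] der by blast
  obtain z1 where z1: "p < z1" "z1 < x" "F N x A - F N p A = (x - p) * g' z1"
    using MVT2[OF px, of "\<lambda>z. F N z A" g'] der by blast
  obtain z2 where z2: "x < z2" "z2 < q" "F N q A - F N x A = (q - x) * g' z2"
    using MVT2[OF xq, of "\<lambda>z. F N z A" g'] der by blast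
  have g0: "g' z0 > 0" using z0 F0 assms(4,7) by (simp add: zero_less_mult_iff)
  have g1: "g' z1 < 0"
  proof -
    have "(x - p) * g' z1 < 0" using z1 gx assms(7) by linarith
    then show ?thesis using px by (simp add: mult_less_0_iff)
  qed
  have g2: "g' z2 > 0"
  proof -
    have "(q - x) * g' z2 > 0" using z2 gx assms(8) by linarith
    then show ?thesis using xq by (simp add: zero_less_mult_iff)
  qed
  define c where "c = root m A"
  have c0: "c \<ge> 0" using assms(3) unfolding c_def by (intro real_root_ge_zero) simp
  have cm: "c ^ m = A" using assms(3) m0 by (simp add: c_def)
  have gform: "g' z = real N * ((1 + z) ^ m - (c * \<bar>1 - z * A\<bar>) ^ m)" for z
  proof -
    have "(c * \<bar>1 - z * A\<bar>) ^ m = A * (1 - z * A) ^ m"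
      using em by (simp add: power_mult_distrib cm power_even_abs)
    then show ?thesis by (simp add: g'_def algebra_simps)
  qed
  have Npos: "real N > 0" using assms(2) by simp
  have pos: "1 + z - c * \<bar>1 - z * A\<bar> > 0" if "z > 0" "g' z > 0" for z
  proof -
    have "0 < real N * ((1 + z) ^ m - (c * \<bar>1 - z * A\<bar>) ^ m)"
      using that(2) by (simp only: gform)
    then have "0 < (1 + z) ^ m - (c * \<bar>1 - z * A\<bar>) ^ m"
      by (rule zero_less_mult_pos) (rule Npos)
    then have "(c * \<bar>1 - z * A\<bar>) ^ m < (1 + z) ^ m" by linarith
    moreover have "0 \<le> 1 + z" using that(1) by simp
    ultimately have "c * \<bar>1 - z * A\<bar> < 1 + z" by (rule power_less_imp_less_base)
    then show ?thesis by simp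
  qed
  have neg: "1 + z - c * \<bar>1 - z * A\<bar> < 0" if "g' z < 0" for z
  proof -
    have "0 < real N * ((c * \<bar>1 - z * A\<bar>) ^ m - (1 + z) ^ m)"
      using that by (simp only: gform right_diff_distrib)
    then have "0 < (c * \<bar>1 - z * A\<bar>) ^ m - (1 + z) ^ m"
      by (rule zero_less_mult_pos) (rule Npos)
    then have "(1 + z) ^ m < (c * \<bar>1 - z * A\<bar>) ^ m" by linarith
    moreover have "0 \<le> c * \<bar>1 - z * A\<bar>" using c0 by simp
    ultimately have "1 + z < c * \<bar>1 - z * A\<bar>" by (rule power_less_imp_less_base)
    then show ?thesis by simp
  qed
  have "1 + z1 - c * \<bar>1 - z1 * A\<bar> > 0"
    by (rule concave_phi[of z0 z1 z2 c A]) (use z0 z1 z2 px c0 pos g0 g2 in auto)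
  with neg[OF g1] show False by simp
qed

lemma neg_case:
  assumes "admissible mu_min mu_max eps_max mu1 eps" "0 < mu_min" "K > 0" "N \<ge> 2" "mu1 < 0"
  shows "F N (K * mu1) (1 + eps) > 0"
proof -
  have e: "eps \<ge> 0" using assms(1) by (simp add: admissible_def)
  have "K * mu1 = - (- K * mu1)" by simp
  moreover have "- K * mu1 > 0" using assms(3,5) by (simp add: mult_pos_neg)
  ultimately show ?thesis using neg_pos[of "- K * mu1" "1 + eps" N] e assms(4) by simp
qed

theorem mainTheorem1:
  fixes N :: nat and I0 K mu_min mu_max eps_max :: real
  assumes "N \<ge> 2" and "I0 > 0" and "0 < mu_min" and "mu_min \<le> mu_max"
    and "eps_max \<ge> 0" and "K > 0"
  shows "(odd N \<longrightarrow>
           ((\<forall>mu1 eps. admissible mu_min mu_max eps_max mu1 eps \<longrightarrow> G_N N I0 K mu1 eps > 0)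
            \<longleftrightarrow> (G_N N I0 K mu_min eps_max > 0 \<and> G_N N I0 K mu_max eps_max > 0)))
       \<and> (even N \<longrightarrow>
           ((\<forall>mu1 eps. admissible mu_min mu_max eps_max mu1 eps \<longrightarrow> G_N N I0 K mu1 eps > 0)
            \<longleftrightarrow> (K > (root N 2 - 1) / mu_min
                 \<or> (K \<le> 1 / (mu_min * (1 + eps_max)) \<and> G_N N I0 K mu_min eps_max > 0))))"
proof -
  define p where "p = K * mu_min"
  define q where "q = K * mu_max"
  define A where "A = 1 + eps_max"
  have p0: "p > 0" using assms by (simp add: p_def)
  have pq: "p \<le> q" using assms by (simp add: p_def q_def)
  have A1: "A \<ge> 1" using assms by (simp add: A_def)
  have Gi: "\<And>m e. G_N N I0 K m e > 0 \<longleftrightarrow> F N (K * m) (1 + e) > 0"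
    using G_pos_iff assms(2,6) by blast
  have ALL: "(\<forall>mu1 eps. admissible mu_min mu_max eps_max mu1 eps \<longrightarrow> G_N N I0 K mu1 eps > 0)
     \<longleftrightarrow> (\<forall>mu1 eps. admissible mu_min mu_max eps_max mu1 eps \<longrightarrow> mu1 > 0 \<longrightarrow> F N (K * mu1) (1 + eps) > 0)"
  proof
    assume H: "\<forall>mu1 eps. admissible mu_min mu_max eps_max mu1 eps \<longrightarrow> G_N N I0 K mu1 eps > 0"
    show "\<forall>mu1 eps. admissible mu_min mu_max eps_max mu1 eps \<longrightarrow> mu1 > 0 \<longrightarrow> F N (K * mu1) (1 + eps) > 0"
      using H Gi by blast
  next
    assume H: "\<forall>mu1 eps. admissible mu_min mu_max eps_max mu1 eps \<longrightarrow> mu1 > 0 \<longrightarrow> F N (K * mu1) (1 + eps) > 0"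
    show "\<forall>mu1 eps. admissible mu_min mu_max eps_max mu1 eps \<longrightarrow> G_N N I0 K mu1 eps > 0"
    proof (intro allI impI)
      fix mu1 eps assume ad: "admissible mu_min mu_max eps_max mu1 eps"
      have "mu1 \<noteq> 0" using ad assms(3) by (auto simp: admissible_def)
      then consider "mu1 > 0" | "mu1 < 0" by linarith
      then have "F N (K * mu1) (1 + eps) > 0"
      proof cases
        case 1 then show ?thesis using H ad by blast
      next
        case 2 then show ?thesis using neg_case[OF ad assms(3,6,1)] by blast
      qed
      then show "G_N N I0 K mu1 eps > 0" using Gi by blast
    qed
  qed
  have admin: "admissible mu_min mu_max eps_max mu_min eps_max"
    using assms by (simp add: admissible_def)
  have admax: "admissible mu_min mu_max eps_max mu_max eps_max"
    using assms by (simp add: admissible_def)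
  have xrange: "p \<le> K * mu1 \<and> K * mu1 \<le> q \<and> 1 \<le> 1 + eps \<and> 1 + eps \<le> A"
    if "admissible mu_min mu_max eps_max mu1 eps" "mu1 > 0" for mu1 eps
    using that assms(6) by (auto simp: admissible_def p_def q_def A_def intro: mult_left_mono)
  have odd_part: "odd N \<longrightarrow>
           ((\<forall>mu1 eps. admissible mu_min mu_max eps_max mu1 eps \<longrightarrow> G_N N I0 K mu1 eps > 0)
            \<longleftrightarrow> (G_N N I0 K mu_min eps_max > 0 \<and> G_N N I0 K mu_max eps_max > 0))"
  proof
    assume oN: "odd N"
    show "(\<forall>mu1 eps. admissible mu_min mu_max eps_max mu1 eps \<longrightarrow> G_N N I0 K mu1 eps > 0)
            \<longleftrightarrow> (G_N N I0 K mu_min eps_max > 0 \<and> G_N N I0 K mu_max eps_max > 0)"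
    proof
      assume H: "\<forall>mu1 eps. admissible mu_min mu_max eps_max mu1 eps \<longrightarrow> G_N N I0 K mu1 eps > 0"
      show "G_N N I0 K mu_min eps_max > 0 \<and> G_N N I0 K mu_max eps_max > 0"
        using H admin admax by blast
    next
      assume H: "G_N N I0 K mu_min eps_max > 0 \<and> G_N N I0 K mu_max eps_max > 0"
      have Fp: "F N p A > 0" using H Gi by (simp add: p_def A_def)
      have Fq: "F N q A > 0" using H Gi by (simp add: q_def A_def)
      have "\<forall>mu1 eps. admissible mu_min mu_max eps_max mu1 eps \<longrightarrow> mu1 > 0 \<longrightarrow> F N (K * mu1) (1 + eps) > 0"
      proof (intro allI impI)
        fix mu1 eps assume ad: "admissible mu_min mu_max eps_max mu1 eps" and m0: "mu1 > 0"
        note r = xrange[OF ad m0]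
        define x where "x = K * mu1"
        have x0: "x > 0" using r p0 by (simp add: x_def)
        have Fx: "F N x A > 0" using odd_unimodal[OF oN assms(1) A1 p0 _ _ Fp Fq] r by (simp add: x_def)
        have "x * (1 + eps) \<le> x * A" using r x0 by (intro mult_left_mono) auto
        then have "(1 - x * A) ^ N \<le> (1 - x * (1 + eps)) ^ N" using oN by (intro power_mono_odd) auto
        then have "F N x A \<le> F N x (1 + eps)" by (simp add: F_def)
        then show "F N (K * mu1) (1 + eps) > 0" using Fx by (simp add: x_def)
      qed
      then show "\<forall>mu1 eps. admissible mu_min mu_max eps_max mu1 eps \<longrightarrow> G_N N I0 K mu1 eps > 0"
        using ALL by blast
    qed
  qed
  have even_part: "even N \<longrightarrow>
           ((\<forall>mu1 eps. admissible mu_min mu_max eps_max mu1 eps \<longrightarrow> G_N N I0 K mu1 eps > 0)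
            \<longleftrightarrow> (K > (root N 2 - 1) / mu_min
                 \<or> (K \<le> 1 / (mu_min * (1 + eps_max)) \<and> G_N N I0 K mu_min eps_max > 0)))"
  proof
    assume eN: "even N"
    have N0: "N > 0" using assms(1) by simp
    have R: "K > (root N 2 - 1) / mu_min \<longleftrightarrow> (1 + p) ^ N > 2"
    proof -
      have "K > (root N 2 - 1) / mu_min \<longleftrightarrow> root N 2 - 1 < K * mu_min"
        using assms(3) by (simp add: pos_divide_less_eq)
      also have "\<dots> \<longleftrightarrow> root N 2 < root N ((1 + p) ^ N)"
        using p0 N0 by (simp add: real_root_power_cancel p_def) linarith
      also have "\<dots> \<longleftrightarrow> 2 < (1 + p) ^ N" using N0 by (rule real_root_less_iff)
      finally show ?thesis .
    qed
    have L: "K \<le> 1 / (mu_min * (1 + eps_max)) \<longleftrightarrow> p * A \<le> 1"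
    proof -
      have "mu_min * (1 + eps_max) > 0" using assms by simp
      then have "K \<le> 1 / (mu_min * (1 + eps_max)) \<longleftrightarrow> K * (mu_min * (1 + eps_max)) \<le> 1"
        by (simp add: pos_le_divide_eq)
      then show ?thesis by (simp add: p_def A_def mult.assoc)
    qed
    have GF: "G_N N I0 K mu_min eps_max > 0 \<longleftrightarrow> F N p A > 0" using Gi by (simp add: p_def A_def)
    have big: "F N x a > 0" if "x \<ge> p" "(1 + p) ^ N > 2" for x a
    proof -
      have "(1 + p) ^ N \<le> (1 + x) ^ N" using that p0 by (intro power_mono) auto
      moreover have "(1 - x * a) ^ N \<ge> 0" using eN by (simp add: zero_le_even_power)
      ultimately show ?thesis using that by (simp add: F_def)
    qed
    show "(\<forall>mu1 eps. admissible mu_min mu_max eps_max mu1 eps \<longrightarrow> G_N N I0 K mu1 eps > 0)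
            \<longleftrightarrow> (K > (root N 2 - 1) / mu_min
                 \<or> (K \<le> 1 / (mu_min * (1 + eps_max)) \<and> G_N N I0 K mu_min eps_max > 0))"
      unfolding R L GF ALL
    proof
      assume H: "\<forall>mu1 eps. admissible mu_min mu_max eps_max mu1 eps \<longrightarrow> mu1 > 0 \<longrightarrow> F N (K * mu1) (1 + eps) > 0"
      have Fp: "F N p A > 0" using H admin assms(3) by (simp add: p_def A_def)
      show "(1 + p) ^ N > 2 \<or> (p * A \<le> 1 \<and> F N p A > 0)"
      proof (rule ccontr)
        assume "\<not> ?thesis"
        then have c1: "(1 + p) ^ N \<le> 2" and c2: "p * A > 1" using Fp by auto
        have p1: "p < 1"
        proof (rule ccontr)
          assume "\<not> p < 1"
          then have "(2::real) ^ N \<le> (1 + p) ^ N" by (intro power_mono) auto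
          moreover have "(2::real) ^ 2 \<le> 2 ^ N" using assms(1) by (intro power_increasing) auto
          ultimately show False using c1 by simp
        qed
        define eps where "eps = 1 / p - 1"
        have e0: "eps \<ge> 0" using p0 p1 by (simp add: eps_def)
        have e1: "eps \<le> eps_max"
        proof -
          have "1 / p < A" using c2 p0 by (simp add: divide_less_eq mult.commute)
          then show ?thesis by (simp add: eps_def A_def)
        qed
        have ad: "admissible mu_min mu_max eps_max mu_min eps"
          using assms e0 e1 by (simp add: admissible_def)
        have "F N p (1 + eps) > 0" using H ad assms(3) by (simp add: p_def)
        moreover have "p * (1 + eps) = 1" using p0 by (simp add: eps_def)
        ultimately have "(1 + p) ^ N > 2" using N0 by (simp add: F_def zero_power)
        then show False using c1 by simp
      qed
    next
      assume H: "(1 + p) ^ N > 2 \<or> (p * A \<le> 1 \<and> F N p A > 0)"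
      show "\<forall>mu1 eps. admissible mu_min mu_max eps_max mu1 eps \<longrightarrow> mu1 > 0 \<longrightarrow> F N (K * mu1) (1 + eps) > 0"
      proof (intro allI impI)
        fix mu1 eps assume ad: "admissible mu_min mu_max eps_max mu1 eps" and m0: "mu1 > 0"
        note r = xrange[OF ad m0]
        define x where "x = K * mu1"
        have xp: "x \<ge> p" using r by (simp add: x_def)
        have "F N x (1 + eps) > 0"
          using H
        proof
          assume "(1 + p) ^ N > 2" then show ?thesis using big xp by blast
        next
          assume H2: "p * A \<le> 1 \<and> F N p A > 0"
          show ?thesis
          proof (cases "x * A \<le> 1")
            case True
            have FxA: "F N x A > 0" using even_conv[OF eN p0 xp] H2 by blast
            have x0: "x > 0" using xp p0 by simp
            have "x * (1 + eps) \<le> x * A" using r x0 by (intro mult_left_mono) auto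
            then have "(1 - x * A) ^ N \<le> (1 - x * (1 + eps)) ^ N" using True by (intro power_mono) auto
            then show ?thesis using FxA by (simp add: F_def)
          next
            case False
            define y where "y = 1 / A"
            have yp: "p \<le> y" using H2 A1 by (simp add: y_def le_divide_eq)
            have "F N y A > 0" using even_conv[OF eN p0 yp] H2 by blast
            moreover have "y * A = 1" using A1 by (simp add: y_def)
            ultimately have Fy: "(1 + y) ^ N > 2" using N0 by (simp add: F_def zero_power)
            have "y < x" using False A1 by (simp add: y_def divide_less_eq mult.commute)
            then have "(1 + y) ^ N \<le> (1 + x) ^ N" using A1 by (intro power_mono) (auto simp: y_def)
            moreover have "(1 - x * (1 + eps)) ^ N \<ge> 0" using eN by (simp add: zero_le_even_power)
            ultimately show ?thesis using Fy by (simp add: F_def)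
          qed
        qed
        then show "F N (K * mu1) (1 + eps) > 0" by (simp add: x_def)
      qed
    qed
  qed
  show ?thesis using odd_part even_part by blast
qed

end
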